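(* Under the assumptions of the convergence setting (loss $0\le\ell\le A$; some $\theta^*$ and $\delta^*>0$ with $\theta^*\cdot\phi^t_{\Delta y}\ge\delta^*$ for all $t$ and $y\in\mathcal{Y}^t$), assume further that $\|\phi(x_t,y)\|_2\le R$ for all $t$ and all $y\in\mathcal{Y}(x_t)$. Then the cumulative hinge loss of the online learning framework satisfies $$\sum_{t=1}^T\mathcal{H}_{\delta_t}(\theta_t,(x_t,y_t))\le 8A\left(\frac{R\|\theta^*\|}{\delta^*}\right)^2.$$
   Context: Each example consists of an input $x_t$ with a finite set $\mathcal{Y}(x_t)$ of feasible outputs and a correct output $y_t\in\mathcal{Y}(x_t)$; a feature map $\phi(x,y)\in\mathbb{R}^F$ is given. Write $\mathcal{Y}^t=\mathcal{Y}(x_t)\setminus\{y_t\}$ and $\phi^t_{\Delta y}=\phi(x_t,y_t)-\phi(x_t,y)$. The framework: $\theta_1=0$; for $t=1,\dots,T$: predict $\hat y_t\in\arg\max_{y\in\mathcal{Y}(x_t)}\theta_t\cdot\phi(x_t,y)$, suffer loss $\delta_t=\ell(y_t,\hat y_t)$, and set $\theta_{t+1}=\arg\min_{\theta'}\|\theta'-\theta_t\|_2^2$ subject to $\theta'\cdot\phi^t_{\Delta y}\ge\delta_t$ for all $y\in\mathcal{Y}^t$. The hinge loss is $\mathcal{H}_{\delta_t}(\theta_t,(x_t,y_t))=\max\bigl(0,\max_{y\in\mathcal{Y}^t}(\delta_t-\theta_t\cdot\phi^t_{\Delta y})\bigr)$. All norms are Euclidean. *)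

theory Defs
  imports "HOL-Analysis.Analysis"
begin

definition dphi :: "('x \<Rightarrow> 'y \<Rightarrow> 'v::real_inner) \<Rightarrow> 'x \<Rightarrow> 'y \<Rightarrow> 'y \<Rightarrow> 'v" where
  "dphi \<phi> x yt y = \<phi> x yt - \<phi> x y"

definition feasible :: "('x \<Rightarrow> 'y \<Rightarrow> 'v::real_inner) \<Rightarrow> 'y set \<Rightarrow> 'x \<Rightarrow> 'y \<Rightarrow> real \<Rightarrow> 'v set" where
  "feasible \<phi> Yx x yt \<delta> = {\<theta>'. \<forall>y\<in>Yx - {yt}. \<theta>' \<bullet> dphi \<phi> x yt y \<ge> \<delta>}"

definition hinge_loss :: "real \<Rightarrow> 'v::real_inner \<Rightarrow> ('x \<Rightarrow> 'y \<Rightarrow> 'v) \<Rightarrow> 'y set \<Rightarrow> 'x \<Rightarrow> 'y \<Rightarrow> real" where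
  "hinge_loss \<delta> \<theta> \<phi> Yx x yt = Max (insert 0 ((\<lambda>y. \<delta> - \<theta> \<bullet> dphi \<phi> x yt y) ` (Yx - {yt})))"

end

theory Submission
  imports Defs
begin

lemma proj_vi:
  fixes p q v :: "'v::real_inner"
  assumes conv: "\<forall>s. 0 \<le> s \<and> s \<le> 1 \<longrightarrow> p + s *\<^sub>R (v - p) \<in> C"
    and mn: "\<forall>z\<in>C. norm (p - q) \<le> norm (z - q)"
  shows "(p - q) \<bullet> (v - p) \<ge> 0"
proof (rule ccontr)
  assume neg: "\<not> ?thesis"
  define w where "w = v - p"
  define d where "d = p - q"
  have dw: "d \<bullet> w < 0" using neg by (simp add: w_def d_def)
  hence "w \<noteq> 0" by auto
  hence ww: "w \<bullet> w > 0" by simp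
  define s where "s = min 1 (- (d \<bullet> w) / (w \<bullet> w))"
  have "d \<bullet> w / (w \<bullet> w) < 0" using dw ww by (simp add: divide_neg_pos)
  hence s0: "0 < s" by (simp add: s_def)
  have s1: "s \<le> 1" by (simp add: s_def)
  have sw: "s * (w \<bullet> w) \<le> - (d \<bullet> w)"
  proof -
    have h: "s \<le> (- (d \<bullet> w)) / (w \<bullet> w)" unfolding s_def by (rule min.cobounded2)
    show ?thesis using pos_le_divide_eq[OF ww] h by blast
  qed
  have "p + s *\<^sub>R w \<in> C" using conv s0 s1 by (simp add: w_def)
  hence "norm d \<le> norm (d + s *\<^sub>R w)" using mn by (simp add: d_def algebra_simps)
  hence "(norm d)^2 \<le> (norm (d + s *\<^sub>R w))^2" by (simp add: power_mono)
  hence "d \<bullet> d \<le> (d + s *\<^sub>R w) \<bullet> (d + s *\<^sub>R w)" by (simp add: power2_norm_eq_inner)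
  hence "0 \<le> 2 * s * (d \<bullet> w) + s * s * (w \<bullet> w)"
    by (simp add: inner_add_left inner_add_right inner_commute algebra_simps)
  hence "0 \<le> s * (2 * (d \<bullet> w) + s * (w \<bullet> w))" by (simp add: algebra_simps)
  hence "0 \<le> 2 * (d \<bullet> w) + s * (w \<bullet> w)" using s0 by (simp add: zero_le_mult_iff)
  thus False using sw dw by linarith
qed

lemma step:
  fixes g :: "'y \<Rightarrow> 'v::real_inner" and \<theta>t \<theta>n u :: 'v
  assumes finY: "finite Ys"
    and feas: "\<forall>y\<in>Ys. \<theta>n \<bullet> g y \<ge> \<delta>"
    and mn: "\<forall>z. (\<forall>y\<in>Ys. z \<bullet> g y \<ge> \<delta>) \<longrightarrow> norm (\<theta>n - \<theta>t) \<le> norm (z - \<theta>t)"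
    and d0: "0 \<le> \<delta>" and dA: "\<delta> \<le> A"
    and uy: "\<forall>y\<in>Ys. u \<bullet> g y \<ge> 2 * A"
    and gR: "\<forall>y\<in>Ys. norm (g y) \<le> 2 * R" and R0: "0 \<le> R"
    and Hdef: "H = Max (insert 0 ((\<lambda>y. \<delta> - \<theta>t \<bullet> g y) ` Ys))"
  shows "A * H \<le> 2 * R^2 * ((norm (\<theta>t - u))^2 - (norm (\<theta>n - u))^2)"
proof -
  define C where "C = {z. \<forall>y\<in>Ys. z \<bullet> g y \<ge> \<delta>}"
  have convC: "\<forall>s. 0 \<le> s \<and> s \<le> 1 \<longrightarrow> p + s *\<^sub>R (v - p) \<in> C" if "p \<in> C" "v \<in> C" for p v
  proof (intro allI impI ballI, elim conjE)
    fix s :: real assume s: "0 \<le> s" "s \<le> 1"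
    have "\<delta> \<le> (p + s *\<^sub>R (v - p)) \<bullet> g y" if y: "y \<in> Ys" for y
    proof -
      have a: "\<delta> \<le> p \<bullet> g y" "\<delta> \<le> v \<bullet> g y" using that \<open>p \<in> C\<close> \<open>v \<in> C\<close> by (auto simp: C_def)
      have "(p + s *\<^sub>R (v - p)) \<bullet> g y = (1 - s) * (p \<bullet> g y) + s * (v \<bullet> g y)"
        by (simp add: inner_add_left inner_diff_left algebra_simps)
      also have "\<dots> \<ge> (1 - s) * \<delta> + s * \<delta>"
        using a s by (intro add_mono mult_left_mono) auto
      finally show ?thesis by (simp add: algebra_simps)
    qed
    thus "p + s *\<^sub>R (v - p) \<in> C" by (simp add: C_def)
  qed
  have mnC: "\<forall>z\<in>C. norm (\<theta>n - \<theta>t) \<le> norm (z - \<theta>t)" using mn by (auto simp: C_def)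
  have nC: "\<theta>n \<in> C" using feas by (simp add: C_def)
  have A0: "0 \<le> A" using d0 dA by simp
  have uC: "u \<in> C" using uy dA A0 by (auto simp: C_def intro: order_trans[of _ "2*A"])
  define \<Delta> where "\<Delta> = \<theta>n - \<theta>t"
  have vi_u: "\<Delta> \<bullet> (u - \<theta>n) \<ge> 0" using proj_vi[OF convC[OF nC uC] mnC] by (simp add: \<Delta>_def)
  have Deq: "(norm (\<theta>t - u))^2 - (norm (\<theta>n - u))^2 = \<Delta> \<bullet> \<Delta> + 2 * (\<Delta> \<bullet> (u - \<theta>n))"
  proof -
    have e: "\<theta>t - u = (\<theta>n - u) - \<Delta>" by (simp add: \<Delta>_def)
    have gen: "(norm (a - b))^2 - (norm a)^2 = b \<bullet> b + 2 * (b \<bullet> (- a))" for a b :: 'v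
      by (simp add: power2_norm_eq_inner inner_diff_left inner_diff_right inner_commute)
    show ?thesis unfolding e using gen[of "\<theta>n - u" \<Delta>] by simp
  qed
  define D where "D = \<Delta> \<bullet> \<Delta> + 2 * (\<Delta> \<bullet> (u - \<theta>n))"
  have DD0: "0 \<le> \<Delta> \<bullet> \<Delta>" by simp
  have D0: "0 \<le> D" using vi_u DD0 by (simp add: D_def)
  have finS: "finite (insert 0 ((\<lambda>y. \<delta> - \<theta>t \<bullet> g y) ` Ys))" using finY by simp
  have H0: "0 \<le> H" unfolding Hdef using finS by (intro Max_ge) auto
  have Hge: "\<delta> - \<theta>t \<bullet> g y \<le> H" if "y \<in> Ys" for y unfolding Hdef using finS that by (intro Max_ge) auto
  have Hle: "H \<le> 2 * R * norm \<Delta>"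
    unfolding Hdef Max_le_iff[OF finS insert_not_empty]
  proof (intro ballI)
    fix x assume "x \<in> insert 0 ((\<lambda>y. \<delta> - \<theta>t \<bullet> g y) ` Ys)"
    then consider "x = 0" | y where "y \<in> Ys" "x = \<delta> - \<theta>t \<bullet> g y" by auto
    then show "x \<le> 2 * R * norm \<Delta>"
    proof cases
      case 1 thus ?thesis using R0 by simp
    next
    case (2 y) note y = 2(1)
    have "x = \<delta> - \<theta>t \<bullet> g y" by fact
    have "\<delta> - \<theta>t \<bullet> g y \<le> \<theta>n \<bullet> g y - \<theta>t \<bullet> g y" using feas y by auto
    also have "\<dots> = \<Delta> \<bullet> g y" by (simp add: \<Delta>_def inner_diff_left)
    also have "\<dots> \<le> norm \<Delta> * norm (g y)" by (rule Cauchy_Schwarz_ineq2[THEN order_trans[OF abs_ge_self]])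
    also have "\<dots> \<le> norm \<Delta> * (2 * R)" using gR y by (intro mult_left_mono) auto
    finally show ?thesis using 2 by (simp add: algebra_simps)
    qed
  qed
  have H2: "H^2 \<le> 4 * R^2 * (\<Delta> \<bullet> \<Delta>)"
  proof -
    have "H^2 \<le> (2 * R * norm \<Delta>)^2" using H0 Hle by (intro power_mono) auto
    thus ?thesis by (simp add: power_mult_distrib power2_norm_eq_inner)
  qed
  show ?thesis
  proof (cases "H = 0")
    case True thus ?thesis using D0 Deq by (simp add: D_def)
  next
    case False
    hence Hp: "H > 0" using H0 by simp
    define v where "v = (A / (H + A)) *\<^sub>R \<theta>t + (H / (H + A)) *\<^sub>R u"
    have HA: "H + A > 0" using Hp A0 by simp
    have v_eq: "(H + A) *\<^sub>R v = A *\<^sub>R \<theta>t + H *\<^sub>R u" using HA by (simp add: v_def scaleR_add_right)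
    have vC: "v \<in> C" unfolding C_def
    proof (intro CollectI ballI)
      fix y assume y: "y \<in> Ys"
      have "(H + A) * (v \<bullet> g y) = A * (\<theta>t \<bullet> g y) + H * (u \<bullet> g y)"
        using arg_cong[OF v_eq, of "\<lambda>z. z \<bullet> g y"] by (simp add: inner_add_left)
      also have "\<dots> \<ge> A * (\<delta> - H) + H * (2 * A)"
        using Hge[OF y] uy y A0 Hp by (intro add_mono mult_left_mono) auto
      moreover have "H * \<delta> \<le> H * A" using dA Hp by (intro mult_left_mono) auto
      ultimately have "(H + A) * (v \<bullet> g y) \<ge> (H + A) * \<delta>"
        by (simp add: algebra_simps)
      thus "\<delta> \<le> v \<bullet> g y" using HA by (simp add: mult_le_cancel_left)
    qed
    have vi_v: "\<Delta> \<bullet> (v - \<theta>n) \<ge> 0" using proj_vi[OF convC[OF nC vC] mnC] by (simp add: \<Delta>_def)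
    have "(H + A) * (\<Delta> \<bullet> (v - \<theta>n)) = H * (\<Delta> \<bullet> (u - \<theta>t)) - (H + A) * (\<Delta> \<bullet> \<Delta>)"
    proof -
      have "(H + A) *\<^sub>R (v - \<theta>n) = H *\<^sub>R (u - \<theta>t) - (H + A) *\<^sub>R \<Delta>"
        using v_eq by (simp add: \<Delta>_def algebra_simps)
      from arg_cong[OF this, of "\<lambda>z. \<Delta> \<bullet> z"] show ?thesis
        by (simp add: inner_diff_right)
    qed
    hence k1: "H * (\<Delta> \<bullet> (u - \<theta>t)) \<ge> (H + A) * (\<Delta> \<bullet> \<Delta>)"
      using vi_v HA by (smt (verit) mult_nonneg_nonneg)
    have "\<Delta> \<bullet> (u - \<theta>t) = \<Delta> \<bullet> (u - \<theta>n) + \<Delta> \<bullet> \<Delta>"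
      by (simp add: \<Delta>_def inner_diff_right)
    hence k2: "H * (\<Delta> \<bullet> (u - \<theta>n)) \<ge> A * (\<Delta> \<bullet> \<Delta>)" using k1 by (simp add: algebra_simps)
    have e1: "H * D = H * (\<Delta> \<bullet> \<Delta>) + 2 * (H * (\<Delta> \<bullet> (u - \<theta>n)))"
      by (simp add: D_def algebra_simps)
    have "0 \<le> H * (\<Delta> \<bullet> \<Delta>)" using Hp DD0 by simp
    hence HD: "H * D \<ge> 2 * A * (\<Delta> \<bullet> \<Delta>)" using e1 k2 by linarith
    have "2 * R^2 * (2 * A * (\<Delta> \<bullet> \<Delta>)) \<le> 2 * R^2 * (H * D)"
      using HD by (intro mult_left_mono) auto
    hence "H * (2 * R^2 * D) \<ge> A * (4 * R^2 * (\<Delta> \<bullet> \<Delta>))"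
      by (simp add: algebra_simps)
    also have "A * (4 * R^2 * (\<Delta> \<bullet> \<Delta>)) \<ge> A * H^2" using H2 A0 by (rule mult_left_mono)
    finally have "H * (A * H) \<le> H * (2 * R^2 * D)" by (simp add: power2_eq_square algebra_simps)
    hence "A * H \<le> 2 * R^2 * D" using Hp by (simp add: mult_le_cancel_left)
    thus ?thesis using Deq by (simp add: D_def)
  qed
qed

theorem theorem2:
  fixes X :: "nat \<Rightarrow> 'x" and Y :: "'x \<Rightarrow> 'y set" and yc :: "nat \<Rightarrow> 'y"
    and \<phi> :: "'x \<Rightarrow> 'y \<Rightarrow> 'v::euclidean_space" and loss_fn :: "'y \<Rightarrow> 'y \<Rightarrow> real"
    and A R \<delta>s :: real and \<theta>s :: 'v and \<theta> :: "nat \<Rightarrow> 'v" and yhat :: "nat \<Rightarrow> 'y" and T :: nat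
  assumes fin: "\<forall>t\<ge>1. finite (Y (X t))"
    and corr: "\<forall>t\<ge>1. yc t \<in> Y (X t)"
    and lossb: "\<forall>a b. 0 \<le> loss_fn a b \<and> loss_fn a b \<le> A"
    and dpos: "\<delta>s > 0"
    and sep: "\<forall>t\<ge>1. \<forall>y\<in>Y (X t) - {yc t}. \<theta>s \<bullet> dphi \<phi> (X t) (yc t) y \<ge> \<delta>s"
    and bound: "\<forall>t\<ge>1. \<forall>y\<in>Y (X t). norm (\<phi> (X t) y) \<le> R"
    and init: "\<theta> 1 = 0"
    and pred: "\<forall>t\<ge>1. yhat t \<in> Y (X t) \<and>
                 (\<forall>y\<in>Y (X t). \<theta> t \<bullet> \<phi> (X t) y \<le> \<theta> t \<bullet> \<phi> (X t) (yhat t))"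
    and upd: "\<forall>t\<ge>1. \<theta> (Suc t) \<in> feasible \<phi> (Y (X t)) (X t) (yc t) (loss_fn (yc t) (yhat t)) \<and>
                 (\<forall>\<theta>'\<in>feasible \<phi> (Y (X t)) (X t) (yc t) (loss_fn (yc t) (yhat t)).
                    norm (\<theta> (Suc t) - \<theta> t) \<le> norm (\<theta>' - \<theta> t))"
  shows "(\<Sum>t=1..T. hinge_loss (loss_fn (yc t) (yhat t)) (\<theta> t) \<phi> (Y (X t)) (X t) (yc t))
           \<le> 8 * A * (R * norm \<theta>s / \<delta>s)^2"
proof -
  have A0: "0 \<le> A" using lossb by (meson order_trans)
  define Hs where "Hs t = hinge_loss (loss_fn (yc t) (yhat t)) (\<theta> t) \<phi> (Y (X t)) (X t) (yc t)" for t
  show ?thesis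
  proof (cases "A = 0")
    case True
    have l0: "loss_fn a b = 0" for a b using lossb True by (metis antisym)
    have th0: "\<theta> t = 0" if "t \<ge> 1" for t
      using that
    proof (induction t rule: dec_induct)
      case base show ?case by (rule init)
    next
      case (step n)
      have "0 \<in> feasible \<phi> (Y (X n)) (X n) (yc n) (loss_fn (yc n) (yhat n))"
        by (simp add: feasible_def l0)
      hence "norm (\<theta> (Suc n) - \<theta> n) \<le> norm (0 - \<theta> n)" using upd step by blast
      thus ?case using step by simp
    qed
    have "Hs t = 0" if "t \<in> {1..T}" for t
    proof -
      have "Hs t = Max (insert 0 ((\<lambda>y. 0::real) ` (Y (X t) - {yc t})))"
        using th0[of t] that by (simp add: Hs_def hinge_loss_def l0)
      also have eq0: "insert 0 ((\<lambda>y. 0::real) ` (Y (X t) - {yc t})) = {0}" by auto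
      have "Max (insert 0 ((\<lambda>y. 0::real) ` (Y (X t) - {yc t}))) = 0" unfolding eq0 by simp
      finally show ?thesis .
    qed
    hence "(\<Sum>t=1..T. Hs t) = 0" by simp
    thus ?thesis using True by (simp add: Hs_def)
  next
    case False
    hence Ap: "A > 0" using A0 by simp
    define u where "u = (2 * A / \<delta>s) *\<^sub>R \<theta>s"
    define f where "f t = (norm (\<theta> t - u))^2" for t
    have stp: "A * Hs t \<le> 2 * R^2 * (f t - f (Suc t))" if t: "t \<in> {1..T}" for t
    proof -
      have t1: "t \<ge> 1" using t by simp
      have R0: "0 \<le> R" using bound corr t1 by (meson norm_ge_zero order_trans)
      show ?thesis unfolding Hs_def f_def hinge_loss_def
      proof (rule step[where g = "dphi \<phi> (X t) (yc t)" and Ys = "Y (X t) - {yc t}"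
            and \<delta> = "loss_fn (yc t) (yhat t)" and \<theta>t = "\<theta> t" and \<theta>n = "\<theta> (Suc t)"])
        show "finite (Y (X t) - {yc t})" using fin t1 by simp
        show "\<forall>y\<in>Y (X t) - {yc t}. loss_fn (yc t) (yhat t) \<le> \<theta> (Suc t) \<bullet> dphi \<phi> (X t) (yc t) y"
          using upd t1 by (simp add: feasible_def)
        show "\<forall>z. (\<forall>y\<in>Y (X t) - {yc t}. loss_fn (yc t) (yhat t) \<le> z \<bullet> dphi \<phi> (X t) (yc t) y) \<longrightarrow>
            norm (\<theta> (Suc t) - \<theta> t) \<le> norm (z - \<theta> t)"
          using upd t1 by (simp add: feasible_def)
        show "0 \<le> loss_fn (yc t) (yhat t)" "loss_fn (yc t) (yhat t) \<le> A" using lossb by auto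
        show "\<forall>y\<in>Y (X t) - {yc t}. 2 * A \<le> u \<bullet> dphi \<phi> (X t) (yc t) y"
        proof
          fix y assume y: "y \<in> Y (X t) - {yc t}"
          have "(2 * A / \<delta>s) * \<delta>s \<le> (2 * A / \<delta>s) * (\<theta>s \<bullet> dphi \<phi> (X t) (yc t) y)"
            using sep t1 y A0 dpos by (intro mult_left_mono) auto
          thus "2 * A \<le> u \<bullet> dphi \<phi> (X t) (yc t) y" using dpos by (simp add: u_def)
        qed
        show "\<forall>y\<in>Y (X t) - {yc t}. norm (dphi \<phi> (X t) (yc t) y) \<le> 2 * R"
        proof
          fix y assume y: "y \<in> Y (X t) - {yc t}"
          have "norm (dphi \<phi> (X t) (yc t) y) \<le> norm (\<phi> (X t) (yc t)) + norm (\<phi> (X t) y)"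
            unfolding dphi_def by (rule norm_triangle_ineq4)
          also have "\<dots> \<le> R + R" using bound corr t1 y by (intro add_mono) auto
          finally show "norm (dphi \<phi> (X t) (yc t) y) \<le> 2 * R" by simp
        qed
        show "0 \<le> R" by (rule R0)
      qed simp
    qed
    have tele: "(\<Sum>t=1..T. f t - f (Suc t)) = f 1 - f (Suc T)"
      by (induction T) (auto simp: sum.atLeast1_atMost_eq)
    have "A * (\<Sum>t=1..T. Hs t) = (\<Sum>t=1..T. A * Hs t)" by (simp add: sum_distrib_left)
    also have "\<dots> \<le> (\<Sum>t=1..T. 2 * R^2 * (f t - f (Suc t)))" by (rule sum_mono) (rule stp)
    also have "\<dots> = 2 * R^2 * (f 1 - f (Suc T))" unfolding sum_distrib_left[symmetric] tele ..
    also have "\<dots> \<le> 2 * R^2 * f 1" by (intro mult_left_mono) (auto simp: f_def)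
    also have "\<dots> = 2 * R^2 * ((2 * A / \<delta>s) * norm \<theta>s)^2"
      unfolding f_def init u_def using A0 dpos by simp
    also have "\<dots> = A * (8 * A * (R * norm \<theta>s / \<delta>s)^2)"
      by (simp add: power_mult_distrib power_divide power2_eq_square algebra_simps)
    finally have "A * (\<Sum>t=1..T. Hs t) \<le> A * (8 * A * (R * norm \<theta>s / \<delta>s)^2)" .
    hence "(\<Sum>t=1..T. Hs t) \<le> 8 * A * (R * norm \<theta>s / \<delta>s)^2" using Ap by (simp add: mult_le_cancel_left)
    thus ?thesis by (simp add: Hs_def)
  qed
qed

end
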